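(* Let $g\colon A\to D$ and $h\colon B\to D$ be lattice epimorphisms, where $A$ and $B$ are lattices with top and bottom elements $0_A,1_A,0_B,1_B$. If the fiber product $\{(a,b)\in A\times B: g(a)=h(b)\}$ is generated as a lattice by a set $G$, then $\{(a,b)\in A\times B: g(a)\le h(b)\}$ is generated as a lattice by $G\cup\{(0_A,1_B)\}$. In particular, if the fiber product is finitely generated, so is the latter sublattice. *)

theory Defs
  imports Main "HOL-Library.Product_Order"
begin

definition lattice_hom :: "('a::lattice \<Rightarrow> 'b::lattice) \<Rightarrow> bool" where
  "lattice_hom f \<longleftrightarrow> (\<forall>x y. f (sup x y) = sup (f x) (f y) \<and> f (inf x y) = inf (f x) (f y))"

definition lattice_epi :: "('a::lattice \<Rightarrow> 'b::lattice) \<Rightarrow> bool" where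
  "lattice_epi f \<longleftrightarrow> lattice_hom f \<and> surj f"

inductive_set lat_gen :: "'a::lattice set \<Rightarrow> 'a set" for G where
  base: "x \<in> G \<Longrightarrow> x \<in> lat_gen G"
| sup_closed: "x \<in> lat_gen G \<Longrightarrow> y \<in> lat_gen G \<Longrightarrow> sup x y \<in> lat_gen G"
| inf_closed: "x \<in> lat_gen G \<Longrightarrow> y \<in> lat_gen G \<Longrightarrow> inf x y \<in> lat_gen G"

end

theory Submission
  imports Defs
begin

lemma hom_mono:
  assumes "lattice_hom f" "x \<le> y" shows "f x \<le> f y"
proof -
  have "f y = sup (f x) (f y)" using assms unfolding lattice_hom_def
    by (metis sup.absorb2)
  thus ?thesis by (metis sup.cobounded1)
qed

lemma main_part:
  fixes g :: "'a::bounded_lattice \<Rightarrow> 'd::lattice"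
    and h :: "'b::bounded_lattice \<Rightarrow> 'd"
    and G :: "('a \<times> 'b) set"
  assumes eg: "lattice_epi g" and eh: "lattice_epi h"
    and gen: "lat_gen G = {(a, b). g a = h b}"
  shows "lat_gen (G \<union> {(bot, top)}) = {(a, b). g a \<le> h b}"
proof
  have hg: "lattice_hom g" and sg: "surj g" and hh: "lattice_hom h" and sh: "surj h"
    using eg eh unfolding lattice_epi_def by auto
  show "lat_gen (G \<union> {(bot, top)}) \<subseteq> {(a, b). g a \<le> h b}"
  proof
    fix p assume "p \<in> lat_gen (G \<union> {(bot, top)})"
    then show "p \<in> {(a, b). g a \<le> h b}"
    proof induction
      case (base x)
      show ?case
      proof (cases "x \<in> G")
        case True
        then have "x \<in> lat_gen G" by (rule lat_gen.base)
        then show ?thesis using gen by auto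
      next
        case False
        then have x: "x = (bot, top)" using base by auto
        obtain y where y: "h top = g y" using sg by blast
        have "g bot \<le> g y" using hom_mono[OF hg] by simp
        then show ?thesis using x y by simp
      qed
    next
      case (sup_closed x y)
      obtain x1 x2 y1 y2 where "x = (x1,x2)" "y = (y1,y2)" by fastforce
      with sup_closed.IH show ?case using hg hh unfolding lattice_hom_def
        by (auto intro: le_supI1 le_supI2)
    next
      case (inf_closed x y)
      obtain x1 x2 y1 y2 where "x = (x1,x2)" "y = (y1,y2)" by fastforce
      with inf_closed.IH show ?case using hg hh unfolding lattice_hom_def
        by (auto intro: le_infI1 le_infI2)
    qed
  qed
  show "{(a, b). g a \<le> h b} \<subseteq> lat_gen (G \<union> {(bot, top)})"
  proof clarify
    fix a b assume le: "g a \<le> h b"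
    have sub: "lat_gen G \<subseteq> lat_gen (G \<union> {(bot, top)})"
    proof
      fix x assume "x \<in> lat_gen G" then show "x \<in> lat_gen (G \<union> {(bot, top)})"
        by induction (auto intro: lat_gen.intros)
    qed
    obtain b' where b': "g a = h b'" using sh by (metis surjD)
    obtain a' where a': "h b = g a'" using sg by (metis surjD)
    have p: "(a, b') \<in> lat_gen (G \<union> {(bot, top)})" using sub gen b' by auto
    have "g (sup a a') = h b" using hg a' le unfolding lattice_hom_def
      by (simp add: sup.absorb2)
    then have q: "(sup a a', b) \<in> lat_gen (G \<union> {(bot, top)})" using sub gen by auto
    have t: "(bot, top) \<in> lat_gen (G \<union> {(bot, top)})" by (auto intro: lat_gen.base)
    have "inf (sup (a, b') (bot, top)) (sup a a', b) \<in> lat_gen (G \<union> {(bot, top)})"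
      using p q t by (intro lat_gen.inf_closed lat_gen.sup_closed)
    moreover have "inf (sup (a, b') (bot, top)) (sup a a', b) = (a, b)"
      by (simp add: sup_Pair_Pair inf_Pair_Pair inf.absorb1)
    ultimately show "(a, b) \<in> lat_gen (G \<union> {(bot, top)})" by simp
  qed
qed

theorem mainTheorem8:
  fixes g :: "'a::bounded_lattice \<Rightarrow> 'd::lattice"
    and h :: "'b::bounded_lattice \<Rightarrow> 'd"
    and G :: "('a \<times> 'b) set"
  assumes "lattice_epi g" and "lattice_epi h"
    and "lat_gen G = {(a, b). g a = h b}"
  shows "lat_gen (G \<union> {(bot, top)}) = {(a, b). g a \<le> h b}
    \<and> ((\<exists>G0. finite G0 \<and> lat_gen G0 = {(a, b). g a = h b})
        \<longrightarrow> (\<exists>G1. finite G1 \<and> lat_gen G1 = {(a, b). g a \<le> h b}))"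
proof (intro conjI impI)
  show "lat_gen (G \<union> {(bot, top)}) = {(a, b). g a \<le> h b}"
    using main_part[OF assms] .
  assume "\<exists>G0. finite G0 \<and> lat_gen G0 = {(a, b). g a = h b}"
  then obtain G0 where "finite G0" "lat_gen G0 = {(a, b). g a = h b}" by blast
  then show "\<exists>G1. finite G1 \<and> lat_gen G1 = {(a, b). g a \<le> h b}"
    using main_part[OF assms(1,2), of G0] by (intro exI[of _ "G0 \<union> {(bot, top)}"]) auto
qed

end
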